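(* Let $p_1\in[0,1]$ and let $PG_n$ be the random pentagonal chain network described in the context. Then for every $n\geq 1$, $$\mathbb{E}\big(Gut(PG_{n})\big)=(72-24p_{1})n^{3}+(72p_{1}-12)n^{2}+(1-48p_{1})n-1.$$
   Context: Random chain network $PG_n$: $PG_1$ is a $5$-cycle (pentagon). For $n\ge 1$, $PG_{n+1}$ is obtained from $PG_n$ by adding a new pentagon $O_{n+1}$ with vertices $x_1,x_2,x_3,x_4,x_5$ in cyclic (clockwise) order and adding one edge joining $x_1$ to a vertex $u_n$ of $PG_n$. The vertex $u_1$ is any vertex of $PG_1$ (all are equivalent). For $n\ge 2$, $u_n$ is a vertex of the last pentagon $O_n$ (whose vertex $x_1$ is the one joined to $u_{n-1}$): with probability $p_1$ one takes $u_n\in\{x_2,x_5\}$ of $O_n$ (the two neighbours of $x_1$ in $O_n$), and with probability $p_2=1-p_1$ one takes $u_n\in\{x_3,x_4\}$ of $O_n$ (the two vertices at distance $2$ from $x_1$ in $O_n$); $p_1,p_2$ do not depend on the step. Thus $PG_n$ has $5n$ vertices. For a graph $G$, $d(v)$ denotes the degree of vertex $v$ and $d(u,v)$ the shortest-path distance. The Gutman index is $Gut(G)=\sum_{\{u,v\}\subseteq V_G} d(u)d(v)\,d(u,v)$, the sum over unordered pairs of distinct vertices. *)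

theory Defs
  imports "HOL-Probability.Probability_Mass_Function"
begin

text \<open>Vertices of PG_n: pairs (k, j), k < n the index of the pentagon (0-based: O_(k+1)),
  j < 5 the position in the pentagon in cyclic order; position 0 is x_1, positions 1..4
  are x_2..x_5.\<close>

definition pg_vertices :: "nat \<Rightarrow> (nat \<times> nat) set" where
  "pg_vertices n = {(k, j). k < n \<and> j < 5}"

text \<open>Position in pentagon k to which x_1 of pentagon k+1 is joined.
  For k = 0 this is u_1 (all vertices of PG_1 equivalent; we take position 0);
  for k \<ge> 1 it is the choice cs ! (k-1) \<in> {1,2,3,4}.\<close>

definition pg_target :: "nat list \<Rightarrow> nat \<Rightarrow> nat" where
  "pg_target cs k = (if k = 0 then 0 else cs ! (k - 1))"

definition pg_adj :: "nat \<Rightarrow> nat list \<Rightarrow> nat \<times> nat \<Rightarrow> nat \<times> nat \<Rightarrow> bool" where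
  "pg_adj n cs x y \<longleftrightarrow> x \<in> pg_vertices n \<and> y \<in> pg_vertices n \<and>
     ((fst x = fst y \<and> (snd y = (snd x + 1) mod 5 \<or> snd x = (snd y + 1) mod 5))
      \<or> (fst y = fst x + 1 \<and> snd y = 0 \<and> snd x = pg_target cs (fst x))
      \<or> (fst x = fst y + 1 \<and> snd x = 0 \<and> snd y = pg_target cs (fst y)))"

definition pg_degree :: "nat \<Rightarrow> nat list \<Rightarrow> nat \<times> nat \<Rightarrow> nat" where
  "pg_degree n cs v = card {w \<in> pg_vertices n. pg_adj n cs v w}"

definition pg_dist :: "nat \<Rightarrow> nat list \<Rightarrow> nat \<times> nat \<Rightarrow> nat \<times> nat \<Rightarrow> nat" where
  "pg_dist n cs u v = (LEAST k. (pg_adj n cs ^^ k) u v)"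

text \<open>Gutman index: sum over unordered pairs of distinct vertices = half of the sum over
  ordered pairs (diagonal terms vanish since d(u,u) = 0).\<close>
definition pg_gutman :: "nat \<Rightarrow> nat list \<Rightarrow> real" where
  "pg_gutman n cs = (\<Sum>u\<in>pg_vertices n. \<Sum>v\<in>pg_vertices n.
      real (pg_degree n cs u * pg_degree n cs v * pg_dist n cs u v)) / 2"

text \<open>One random choice of u_k (k \<ge> 2): with prob. p1 a neighbour of x_1 (positions 1 or 4),
  otherwise a vertex at distance 2 (positions 2 or 3); within each pair uniformly.\<close>
definition pg_choice_pmf :: "real \<Rightarrow> nat pmf" where
  "pg_choice_pmf p1 =
     bind_pmf (bernoulli_pmf p1) (\<lambda>b. map_pmf (\<lambda>s. if b then (if s then 1 else 4) else (if s then 2 else 3))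
       (bernoulli_pmf (1/2)))"

text \<open>Independent choices u_2, ..., u_(m+1).\<close>
fun pg_choices_pmf :: "real \<Rightarrow> nat \<Rightarrow> nat list pmf" where
  "pg_choices_pmf p1 0 = return_pmf []"
| "pg_choices_pmf p1 (Suc m) =
     bind_pmf (pg_choices_pmf p1 m) (\<lambda>cs. map_pmf (\<lambda>c. cs @ [c]) (pg_choice_pmf p1))"

end

theory Submission
  imports Defs
begin

definition cd :: "nat \<Rightarrow> nat \<Rightarrow> nat" where
  "cd i j = min ((i + 5 - j) mod 5) ((j + 5 - i) mod 5)"

lemma cd_sym: "cd i j = cd j i" unfolding cd_def by (simp add: min.commute)

lemma lt5: "(i::nat) < 5 \<longleftrightarrow> i = 0 \<or> i = 1 \<or> i = 2 \<or> i = 3 \<or> i = 4" by auto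
lemma cd_self[simp]: "cd i i = 0" unfolding cd_def by simp

lemma cd_step: "j < 5 \<Longrightarrow> z < 5 \<Longrightarrow> cd z ((j+1) mod 5) \<le> cd z j + 1 \<and> cd z j \<le> cd z ((j+1) mod 5) + 1"
  unfolding cd_def lt5 by (elim disjE; simp)

lemma cd_adj: assumes "j < 5" "l < 5" "z < 5" "l = (j+1) mod 5 \<or> j = (l+1) mod 5"
  shows "int (cd z l) \<le> int (cd z j) + 1 \<and> int (cd z j) \<le> int (cd z l) + 1"
  using assms cd_step[of j z] cd_step[of l z] by auto

lemma cd_lt5: "cd i j < 5" unfolding cd_def by simp

lemma sym_relpow: assumes "\<And>x y. R x y = R y x" shows "(R ^^ m) x y \<Longrightarrow> (R ^^ m) y x"
proof (induction m arbitrary: x y)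
  case 0 then show ?case by simp
next
  case (Suc m)
  from Suc.prems obtain w where "(R ^^ m) x w" "R w y" by (rule relpowp_Suc_E)
  then show ?case using Suc.IH assms by (metis relpowp_Suc_I2)
qed

lemma relpow_trans: "(R ^^ m) x y \<Longrightarrow> (R ^^ k) y z \<Longrightarrow> (R ^^ (m + k)) x z"
  by (auto simp: relpowp_add)

locale pgl =
  fixes n :: nat and cs :: "nat list"
  assumes valid: "\<And>k. 1 \<le> k \<Longrightarrow> k + 1 < n \<Longrightarrow> pg_target cs k \<in> {1,2,3,4}"
begin

abbreviation "R \<equiv> pg_adj n cs"
abbreviation "t \<equiv> pg_target cs"
abbreviation "V \<equiv> pg_vertices n"

lemma t0[simp]: "t 0 = 0" by (simp add: pg_target_def)
lemma t_lt5: "k + 1 < n \<Longrightarrow> t k < 5"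
  using valid[of k] by (cases "k = 0") auto
lemma t_ne0: "1 \<le> k \<Longrightarrow> k + 1 < n \<Longrightarrow> t k \<noteq> 0"
  using valid[of k] by auto

lemma inV[simp]: "(a, i) \<in> V \<longleftrightarrow> a < n \<and> i < 5" by (simp add: pg_vertices_def)

lemma R_sym: "R x y = R y x" unfolding pg_adj_def by auto

lemma R_cases: "R (a,i) (b,j) \<longleftrightarrow> a < n \<and> i < 5 \<and> b < n \<and> j < 5 \<and>
   ((a = b \<and> (j = (i+1) mod 5 \<or> i = (j+1) mod 5)) \<or> (b = a + 1 \<and> j = 0 \<and> i = t a)
     \<or> (a = b + 1 \<and> i = 0 \<and> j = t b))"
  unfolding pg_adj_def by auto

definition Hs :: "nat \<Rightarrow> int" where "Hs k = (\<Sum>m<k. int (cd 0 (t m)) + 1)"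
lemma Hs_Suc: "Hs (Suc k) = Hs k + int (cd 0 (t k)) + 1" by (simp add: Hs_def)
lemma Hs_0[simp]: "Hs 0 = 0" by (simp add: Hs_def)

definition dd :: "nat \<times> nat \<Rightarrow> nat \<times> nat \<Rightarrow> int" where
  "dd u v = (if fst u = fst v then int (cd (snd u) (snd v))
     else if fst u < fst v then Hs (fst v) + int (cd 0 (snd v)) - Hs (fst u) - int (cd 0 (t (fst u))) + int (cd (snd u) (t (fst u)))
     else Hs (fst u) + int (cd 0 (snd u)) - Hs (fst v) - int (cd 0 (t (fst v))) + int (cd (snd v) (t (fst v))))"

lemma dd_sym: "dd u v = dd v u" unfolding dd_def by (auto simp: cd_sym)

lemma dd_in: "dd u (b, j) \<le> dd u (b, l) + 1" if "u \<in> V" "j < 5" "l < 5" "b < n"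
   "l = (j+1) mod 5 \<or> j = (l+1) mod 5"
proof -
  obtain a i where u: "u = (a,i)" by (cases u)
  have "a < n" "i < 5" using that u by auto
  consider "a = b" | "a < b" | "b < a" by linarith
  then show ?thesis
  proof cases
    case 1 then show ?thesis using cd_adj[of j l i] that \<open>i<5\<close> u by (auto simp: dd_def)
  next
    case 2 then show ?thesis using cd_adj[of j l 0] that u by (auto simp: dd_def)
  next
    case 3
    have "t b < 5" using t_lt5[of b] 3 \<open>a < n\<close> by simp
    then show ?thesis using 3 cd_adj[of j l "t b"] that u by (auto simp: dd_def cd_sym[of _ "t b"])
  qed
qed

lemma dd_bridge: "dd u (k+1, 0) \<le> dd u (k, t k) + 1 \<and> dd u (k, t k) \<le> dd u (k+1, 0) + 1"
  if "u \<in> V" "k + 1 < n"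
proof -
  obtain a i where u: "u = (a,i)" by (cases u)
  consider "a = k" | "a < k" | "a = k + 1" | "a > k + 1" by linarith
  then show ?thesis
  proof cases
    case 1 then show ?thesis using u by (simp add: dd_def Hs_Suc)
  next
    case 2 then show ?thesis using u by (simp add: dd_def Hs_Suc)
  next
    case 3 then show ?thesis using u by (simp add: dd_def Hs_Suc cd_sym)
  next
    case 4 then show ?thesis using u by (simp add: dd_def Hs_Suc)
  qed
qed

lemma dd_step: "dd u y \<le> dd u x + 1" if "u \<in> V" "R x y"
proof -
  obtain b j where x: "x = (b,j)" by (cases x)
  obtain c l where y: "y = (c,l)" by (cases y)
  from that(2) have r: "b < n \<and> j < 5 \<and> c < n \<and> l < 5 \<and>
   ((b = c \<and> (l = (j+1) mod 5 \<or> j = (l+1) mod 5)) \<or> (c = b + 1 \<and> l = 0 \<and> j = t b)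
     \<or> (b = c + 1 \<and> j = 0 \<and> l = t c))" unfolding x y R_cases .
  then consider "b = c" "l = (j+1) mod 5 \<or> j = (l+1) mod 5" | "c = b + 1" "l = 0" "j = t b"
    | "b = c + 1" "j = 0" "l = t c" by blast
  then show ?thesis
  proof cases
    case 1 then show ?thesis using dd_in[of u l j b] r that x y by auto
  next
    case 2 then show ?thesis using dd_bridge[of u b] r that x y by auto
  next
    case 3 then show ?thesis using dd_bridge[of u c] r that x y by auto
  qed
qed

lemma dd_lower: "u \<in> V \<Longrightarrow> (R ^^ k) u v \<Longrightarrow> dd u v \<le> int k"
proof (induction k arbitrary: v)
  case 0 then show ?case by (simp add: dd_def)
next
  case (Suc k)
  from Suc.prems(2) obtain w where "(R ^^ k) u w" "R w v" by (rule relpowp_Suc_E)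
  then show ?case using Suc.IH[of w] Suc.prems(1) dd_step[of u w v] by auto
qed

lemma R_fwd: "a < n \<Longrightarrow> i < 5 \<Longrightarrow> R (a,i) (a, (i+1) mod 5)"
  by (simp add: R_cases)

lemma path_fwd: "a < n \<Longrightarrow> i < 5 \<Longrightarrow> (R ^^ m) (a,i) (a, (i+m) mod 5)"
proof (induction m)
  case 0 then show ?case by simp
next
  case (Suc m)
  have "R (a, (i+m) mod 5) (a, ((i+m) mod 5 + 1) mod 5)" using R_fwd Suc.prems by simp
  moreover have "((i+m) mod 5 + 1) mod 5 = (i + Suc m) mod 5" by (simp add: mod_Suc_eq)
  ultimately show ?case using Suc by (metis relpowp_Suc_I)
qed

lemma cyc: "a < n \<Longrightarrow> i < 5 \<Longrightarrow> j < 5 \<Longrightarrow> (R ^^ cd i j) (a,i) (a,j)"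
proof (cases "(j + 5 - i) mod 5 \<le> (i + 5 - j) mod 5")
  case True
  assume h: "a < n" "i < 5" "j < 5"
  have "cd i j = (j + 5 - i) mod 5" using True unfolding cd_def by simp
  moreover have "(i + (j + 5 - i) mod 5) mod 5 = j" using h unfolding lt5 by (elim disjE; simp)
  ultimately show ?thesis using path_fwd[of a i "(j + 5 - i) mod 5"] h by simp
next
  case False
  assume h: "a < n" "i < 5" "j < 5"
  have "cd i j = (i + 5 - j) mod 5" using False unfolding cd_def by simp
  moreover have "(j + (i + 5 - j) mod 5) mod 5 = i" using h unfolding lt5 by (elim disjE; simp)
  ultimately have "(R ^^ cd i j) (a,j) (a,i)" using path_fwd[of a j "(i + 5 - j) mod 5"] h by simp
  then show ?thesis by (rule sym_relpow[of R, OF R_sym])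
qed

lemma path_entry: "a + 1 + d < n \<Longrightarrow> i < 5 \<Longrightarrow> dd (a,i) (a+1+d, 0) \<ge> 1 \<and> (R ^^ nat (dd (a,i) (a+1+d,0))) (a,i) (a+1+d,0)"
proof (induction d)
  case 0
  have ta: "t a < 5" using t_lt5 0 by simp
  have e: "dd (a,i) (a+1, 0) = int (cd i (t a)) + 1" by (simp add: dd_def Hs_Suc)
  have "(R ^^ cd i (t a)) (a,i) (a, t a)" using cyc 0 ta by simp
  moreover have "R (a, t a) (a+1, 0)" using 0 ta by (simp add: R_cases)
  ultimately have "(R ^^ Suc (cd i (t a))) (a,i) (a+1,0)" by (metis relpowp_Suc_I)
  moreover have "nat (dd (a,i) (a+1, 0)) = Suc (cd i (t a))" using e by simp
  ultimately show ?case using e by simp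
next
  case (Suc d)
  let ?b = "a + 1 + d"
  have IH: "dd (a,i) (?b, 0) \<ge> 1" "(R ^^ nat (dd (a,i) (?b,0))) (a,i) (?b,0)" using Suc by auto
  have tb: "t ?b < 5" using t_lt5 Suc.prems by simp
  have e: "dd (a,i) (?b + 1, 0) = dd (a,i) (?b, 0) + int (cd 0 (t ?b)) + 1" by (simp add: dd_def Hs_Suc)
  have "(R ^^ cd 0 (t ?b)) (?b,0) (?b, t ?b)" using cyc Suc.prems tb by simp
  with IH(2) have "(R ^^ (nat (dd (a,i) (?b,0)) + cd 0 (t ?b))) (a,i) (?b, t ?b)" by (rule relpow_trans)
  moreover have "R (?b, t ?b) (?b+1, 0)" using Suc.prems tb by (simp add: R_cases)
  ultimately have "(R ^^ Suc (nat (dd (a,i) (?b,0)) + cd 0 (t ?b))) (a,i) (?b+1,0)" by (metis relpowp_Suc_I)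
  moreover have "nat (dd (a,i) (?b + 1, 0)) = Suc (nat (dd (a,i) (?b,0)) + cd 0 (t ?b))" using e IH(1) by simp
  ultimately show ?case using e IH(1) by simp
qed

lemma path_lt: assumes "a < b" "b < n" "i < 5" "j < 5"
  shows "dd (a,i) (b,j) \<ge> 0 \<and> (R ^^ nat (dd (a,i) (b,j))) (a,i) (b,j)"
proof -
  obtain d where b: "b = a + 1 + d" using assms(1) less_imp_Suc_add by fastforce
  have P: "dd (a,i) (b, 0) \<ge> 1" "(R ^^ nat (dd (a,i) (b,0))) (a,i) (b,0)" using path_entry[of a d i] assms b by auto
  have e: "dd (a,i) (b, j) = dd (a,i) (b, 0) + int (cd 0 j)" using assms by (simp add: dd_def)
  have "(R ^^ cd 0 j) (b,0) (b,j)" using cyc assms by simp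
  with P(2) have "(R ^^ (nat (dd (a,i) (b,0)) + cd 0 j)) (a,i) (b,j)" by (rule relpow_trans)
  moreover have "nat (dd (a,i) (b,j)) = nat (dd (a,i) (b,0)) + cd 0 j" using e P(1) by simp
  ultimately show ?thesis using e P(1) by simp
qed

lemma path_all: assumes "u \<in> V" "v \<in> V"
  shows "dd u v \<ge> 0 \<and> (R ^^ nat (dd u v)) u v"
proof -
  obtain a i where u: "u = (a,i)" by (cases u)
  obtain b j where v: "v = (b,j)" by (cases v)
  have h: "a < n" "i < 5" "b < n" "j < 5" using assms u v by auto
  consider "a = b" | "a < b" | "b < a" by linarith
  then show ?thesis
  proof cases
    case 1 then show ?thesis using cyc[of a i j] h u v by (simp add: dd_def)
  next
    case 2 then show ?thesis using path_lt h u v by simp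
  next
    case 3
    have "dd v u \<ge> 0 \<and> (R ^^ nat (dd v u)) v u" using path_lt[of b a j i] h u v 3 by simp
    then show ?thesis using dd_sym[of u v] sym_relpow[of R, OF R_sym] by metis
  qed
qed

lemma dist_eq: assumes "u \<in> V" "v \<in> V" shows "pg_dist n cs u v = nat (dd u v)"
  unfolding pg_dist_def
proof (rule Least_equality)
  show "(R ^^ nat (dd u v)) u v" using path_all assms by blast
next
  fix k assume "(R ^^ k) u v"
  then show "nat (dd u v) \<le> k" using dd_lower assms by fastforce
qed

end


lemma sum5: "(\<Sum>i<5. f i) = f 0 + f 1 + f 2 + f 3 + f 4" for f :: "nat \<Rightarrow> real"
  by (simp add: eval_nat_numeral)

definition degf :: "bool \<Rightarrow> bool \<Rightarrow> nat \<Rightarrow> nat \<Rightarrow> real" where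
  "degf e0 e1 t i = 2 + (if i = 0 \<and> e0 then 1 else 0) + (if i = t \<and> e1 then 1 else 0)"

lemma L_D: "(e1 \<Longrightarrow> t < 5) \<Longrightarrow> (\<Sum>i<5. degf e0 e1 t i) = 10 + of_bool e0 + of_bool e1"
  by (cases e1; cases e0) (auto simp: sum5 degf_def lt5)

lemma L_Q: "(e1 \<Longrightarrow> t < 5) \<Longrightarrow> (\<Sum>i<5. degf e0 e1 t i * cd 0 i) = 12 + (if e1 then real (cd 0 t) else 0)"
  by (cases e1; cases e0) (auto simp: sum5 degf_def lt5 cd_def)

lemma L_P: "t < 5 \<Longrightarrow> (\<Sum>i<5. degf e0 e1 t i * cd i t) = 12 + (if e0 then real (cd 0 t) else 0)"
  by (cases e1; cases e0) (auto simp: sum5 degf_def lt5 cd_def)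

lemma L_W: "(e1 \<Longrightarrow> t < 5) \<Longrightarrow> (e0 \<Longrightarrow> e1 \<Longrightarrow> t \<noteq> 0) \<Longrightarrow>
   (\<Sum>i<5. \<Sum>j<5. degf e0 e1 t i * degf e0 e1 t j * cd i j) =
     2 * (60 + 12 * of_bool e0 + 12 * of_bool e1 + (if e0 \<and> e1 then real (cd 0 t) else 0))"
  by (cases e1; cases e0) (auto simp: sum5 degf_def lt5 cd_def)



lemma adj5: "(i::nat) < 5 \<Longrightarrow> j < 5 \<Longrightarrow> (j = (i+1) mod 5 \<or> i = (j+1) mod 5) \<longleftrightarrow> (j = (i+1) mod 5 \<or> j = (i+4) mod 5)"
  unfolding lt5 by (elim disjE; simp)
lemma ne5: "i < 5 \<Longrightarrow> (i+1) mod 5 \<noteq> (i+4) mod 5" for i :: nat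
  unfolding lt5 by (elim disjE; simp)

lemma sum_sym_split:
  fixes f :: "nat \<Rightarrow> nat \<Rightarrow> real"
  assumes "\<And>a b. f a b = f b a"
  shows "(\<Sum>a<N. \<Sum>b<N. f a b) = (\<Sum>a<N. f a a) + 2 * (\<Sum>b<N. \<Sum>a<b. f a b)"
proof (induction N)
  case 0 then show ?case by simp
next
  case (Suc N)
  have "(\<Sum>a<Suc N. \<Sum>b<Suc N. f a b) = (\<Sum>a<N. \<Sum>b<N. f a b) + (\<Sum>a<N. f a N) + (\<Sum>b<N. f N b) + f N N"
    by (simp add: sum.distrib)
  also have "(\<Sum>b<N. f N b) = (\<Sum>a<N. f a N)" using assms by simp
  finally show ?case using Suc by simp
qed

lemma sum_bilin:
  fixes f g X Y :: "nat \<Rightarrow> real"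
  shows "(\<Sum>i\<in>I. \<Sum>j\<in>J. f i * g j * (X j - Y i)) = sum f I * (\<Sum>j\<in>J. g j * X j) - sum g J * (\<Sum>i\<in>I. f i * Y i)"
  by (simp add: sum_distrib_left sum_distrib_right sum_subtractf right_diff_distrib algebra_simps sum.swap[of _ J])

context pgl begin

lemma deg_eq: assumes "a < n" "i < 5"
  shows "pg_degree n cs (a,i) = 2 + (if i = 0 \<and> 1 \<le> a then 1 else 0) + (if i = t a \<and> a + 1 < n then 1 else 0)"
proof -
  have S: "{w \<in> V. R (a,i) w} = {(a,(i+1) mod 5), (a,(i+4) mod 5)} \<union> (if i = 0 \<and> 1 \<le> a then {(a-1, t (a-1))} else {})
     \<union> (if i = t a \<and> a + 1 < n then {(a+1,0)} else {})" (is "?L = ?S")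
  proof (rule set_eqI)
    fix w :: "nat \<times> nat"
    obtain b j where w: "w = (b,j)" by (cases w)
    have t1: "1 \<le> a \<Longrightarrow> t (a-1) < 5" using t_lt5[of "a-1"] assms by simp
    show "w \<in> ?L \<longleftrightarrow> w \<in> ?S"
      unfolding w using assms adj5[of i j] t1 by (auto simp: R_cases)
  qed
  have ne: "(i+1) mod 5 \<noteq> (i+4) mod 5" using ne5 assms by simp
  show ?thesis unfolding pg_degree_def S using ne by (auto simp: card_insert_if)
qed

definition dg :: "nat \<Rightarrow> nat \<Rightarrow> real" where "dg a i = degf (1 \<le> a) (a + 1 < n) (t a) i"

lemma deg_real: "a < n \<Longrightarrow> i < 5 \<Longrightarrow> real (pg_degree n cs (a,i)) = dg a i"
  by (simp add: deg_eq dg_def degf_def)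

lemma V_eq: "V = {..<n} \<times> {..<5}" by (auto simp: pg_vertices_def)

lemma sumV: "(\<Sum>u\<in>V. f u) = (\<Sum>a<n. \<Sum>i<5. f (a,i))"
  by (simp add: V_eq sum.cartesian_product)

definition blk :: "nat \<Rightarrow> nat \<Rightarrow> real" where
  "blk a b = (\<Sum>i<5. \<Sum>j<5. dg a i * dg b j * of_int (dd (a,i) (b,j)))"

lemma gut_blk: "pg_gutman n cs = (\<Sum>a<n. \<Sum>b<n. blk a b) / 2"
proof -
  have "pg_gutman n cs = (\<Sum>a<n. \<Sum>i<(5::nat). \<Sum>b<n. \<Sum>j<(5::nat). dg a i * dg b j * of_int (dd (a,i) (b,j))) / 2"
    unfolding pg_gutman_def sumV
  proof (intro arg_cong2[where f="(/)"] sum.cong refl)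
    fix a i b j :: nat assume h: "a \<in> {..<n}" "i \<in> {..<5}" "b \<in> {..<n}" "j \<in> {..<5}"
    have "dd (a,i) (b,j) \<ge> 0" using path_all[of "(a,i)" "(b,j)"] h by auto
    then show "real (pg_degree n cs (a, i) * pg_degree n cs (b, j) * pg_dist n cs (a, i) (b, j)) =
          dg a i * dg b j * real_of_int (dd (a, i) (b, j))"
      using h by (simp add: deg_real dist_eq)
  qed
  also have "\<dots> = (\<Sum>a<n. \<Sum>b<n. blk a b) / 2"
    unfolding blk_def by (rule arg_cong[where f="\<lambda>x. x / 2"], rule sum.cong[OF refl], rule sum.swap)
  finally show ?thesis .
qed

lemma blk_sym: "blk a b = blk b a"
  unfolding blk_def by (subst sum.swap) (simp add: dd_sym mult.commute mult.left_commute)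

definition cv :: "nat \<Rightarrow> real" where "cv k = (if k + 1 < n then real (cd 0 (t k)) else 0)"
definition Hr :: "nat \<Rightarrow> real" where "Hr b = (\<Sum>m<b. cv m + 1)"

lemma Hs_Hr: "b < n \<Longrightarrow> real_of_int (Hs b) = Hr b"
  unfolding Hs_def Hr_def of_int_sum by (intro sum.cong) (auto simp: cv_def)

end


definition GD :: "nat \<Rightarrow> nat \<Rightarrow> real" where "GD n a = 10 + of_bool (1 \<le> a) + of_bool (a + 1 < n)"
definition GHr :: "(nat \<Rightarrow> real) \<Rightarrow> nat \<Rightarrow> real" where "GHr c b = (\<Sum>m<b. c m + 1)"
definition GW :: "nat \<Rightarrow> (nat \<Rightarrow> real) \<Rightarrow> nat \<Rightarrow> real" where
  "GW n c a = 60 + 12 * of_bool (1 \<le> a) + 12 * of_bool (a + 1 < n) + of_bool (1 \<le> a) * c a"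
definition GIN :: "nat \<Rightarrow> (nat \<Rightarrow> real) \<Rightarrow> nat \<Rightarrow> real" where
  "GIN n c b = GD n b * GHr c b + 12 + c b"
definition GOUT :: "nat \<Rightarrow> (nat \<Rightarrow> real) \<Rightarrow> nat \<Rightarrow> real" where
  "GOUT n c a = GD n a * (GHr c a + c a) - (12 + of_bool (1 \<le> a) * c a)"
definition GF :: "nat \<Rightarrow> (nat \<Rightarrow> real) \<Rightarrow> real" where
  "GF n c = (\<Sum>a<n. GW n c a) + (\<Sum>b<n. \<Sum>a<b. GD n a * GIN n c b - GD n b * GOUT n c a)"

context pgl begin

lemma Hr_G: "Hr = GHr cv" unfolding Hr_def GHr_def by (rule ext) simp

lemma blk_diag: assumes "a < n" shows "blk a a = 2 * GW n cv a"
proof -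
  have "blk a a = (\<Sum>i<5. \<Sum>j<5. degf (1 \<le> a) (a + 1 < n) (t a) i * degf (1 \<le> a) (a + 1 < n) (t a) j * cd i j)"
    unfolding blk_def dg_def by (simp add: dd_def)
  also have "\<dots> = 2 * (60 + 12 * of_bool (1 \<le> a) + 12 * of_bool (a + 1 < n) + (if 1 \<le> a \<and> a + 1 < n then real (cd 0 (t a)) else 0))"
    by (rule L_W) (use t_lt5 t_ne0 in auto)
  also have "\<dots> = 2 * GW n cv a" by (simp add: GW_def cv_def)
  finally show ?thesis .
qed

lemma blk_lt: assumes "a < b" "b < n" shows "blk a b = GD n a * GIN n cv b - GD n b * GOUT n cv a"
proof -
  have ta: "t a < 5" using t_lt5 assms by simp
  have cva: "cv a = real (cd 0 (t a))" using assms by (simp add: cv_def)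
  let ?X = "\<lambda>j. Hr b + real (cd 0 j)"
  let ?Y = "\<lambda>i. Hr a + cv a - real (cd i (t a))"
  have "blk a b = (\<Sum>i<5. \<Sum>j<5. dg a i * dg b j * (?X j - ?Y i))"
    unfolding blk_def
  proof (intro sum.cong refl)
    fix i j
    show "dg a i * dg b j * real_of_int (dd (a, i) (b, j)) = dg a i * dg b j * (?X j - ?Y i)"
      using assms Hs_Hr[of a] Hs_Hr[of b] cva by (simp add: dd_def)
  qed
  also have "\<dots> = sum (dg a) {..<5} * (\<Sum>j<5. dg b j * ?X j) - sum (dg b) {..<5} * (\<Sum>i<5. dg a i * ?Y i)"
    by (rule sum_bilin)
  also have "sum (dg a) {..<5} = GD n a" unfolding dg_def GD_def by (rule L_D) (use ta in auto)
  also have "sum (dg b) {..<5} = GD n b" unfolding dg_def GD_def by (rule L_D) (use t_lt5 in auto)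
  also have "(\<Sum>j<5. dg b j * ?X j) = Hr b * (\<Sum>j<5. dg b j) + (\<Sum>j<5. dg b j * cd 0 j)"
    by (simp add: sum.distrib sum_distrib_left algebra_simps)
  also have "(\<Sum>j<5. dg b j) = GD n b" unfolding dg_def GD_def by (rule L_D) (use t_lt5 in auto)
  also have "(\<Sum>j<5. dg b j * cd 0 j) = 12 + cv b"
    unfolding dg_def cv_def by (subst L_Q) (use t_lt5 in auto)
  also have "(\<Sum>i<5. dg a i * ?Y i) = (Hr a + cv a) * (\<Sum>i<5. dg a i) - (\<Sum>i<5. dg a i * cd i (t a))"
    by (simp add: sum_subtractf sum_distrib_left algebra_simps)
  also have "(\<Sum>i<5. dg a i) = GD n a" unfolding dg_def GD_def by (rule L_D) (use ta in auto)
  also have "(\<Sum>i<5. dg a i * cd i (t a)) = 12 + of_bool (1 \<le> a) * cv a"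
    unfolding dg_def using L_P[OF ta] cva by simp
  finally show ?thesis by (simp add: GIN_def GOUT_def Hr_G algebra_simps)
qed

lemma gut_GF: "pg_gutman n cs = GF n cv"
proof -
  have "pg_gutman n cs = ((\<Sum>a<n. blk a a) + 2 * (\<Sum>b<n. \<Sum>a<b. blk a b)) / 2"
    unfolding gut_blk by (subst sum_sym_split[of blk n]) (rule blk_sym, rule refl)
  also have "(\<Sum>a<n. blk a a) = (\<Sum>a<n. 2 * GW n cv a)" by (intro sum.cong) (auto simp: blk_diag)
  also have "(\<Sum>b<n. \<Sum>a<b. blk a b) = (\<Sum>b<n. \<Sum>a<b. GD n a * GIN n cv b - GD n b * GOUT n cv a)"
    by (intro sum.cong) (auto simp: blk_lt)
  finally show ?thesis unfolding GF_def by (simp add: sum_distrib_left[symmetric])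
qed

end


lemma choice_set: "set_pmf (pg_choice_pmf p) \<subseteq> {1,2,3,4}"
  unfolding pg_choice_pmf_def by (auto simp: set_bind_pmf)

lemma choices_set: "cs \<in> set_pmf (pg_choices_pmf p m) \<Longrightarrow> length cs = m \<and> set cs \<subseteq> {1,2,3,4}"
proof (induction m arbitrary: cs)
  case 0 then show ?case by simp
next
  case (Suc m)
  then obtain cs' c where "cs' \<in> set_pmf (pg_choices_pmf p m)" "c \<in> set_pmf (pg_choice_pmf p)" "cs = cs' @ [c]"
    by (auto simp: set_bind_pmf)
  then show ?case using Suc.IH choice_set by auto
qed

lemma choices_fin: "finite (set_pmf (pg_choices_pmf p m))"
proof -
  have "set_pmf (pg_choices_pmf p m) \<subseteq> {xs. set xs \<subseteq> {1,2,3,4} \<and> length xs = m}"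
    using choices_set by blast
  moreover have "finite {xs. set xs \<subseteq> {1::nat,2,3,4} \<and> length xs = m}"
    by (rule finite_lists_length_eq) simp
  ultimately show ?thesis by (rule finite_subset)
qed

lemma choice_fin: "finite (set_pmf (pg_choice_pmf p))"
  using choice_set finite_subset by blast

lemma E_const: "measure_pmf.expectation M (\<lambda>x. c) = (c::real)"
  by simp

lemma E_nth: "j < m \<Longrightarrow> measure_pmf.expectation (pg_choices_pmf p m) (\<lambda>cs. g (cs ! j) :: real)
   = measure_pmf.expectation (pg_choice_pmf p) g"
proof (induction m)
  case 0 then show ?case by simp
next
  case (Suc m)
  let ?A = "set_pmf (pg_choices_pmf p m)"
  have "measure_pmf.expectation (pg_choices_pmf p (Suc m)) (\<lambda>cs. g (cs ! j))
      = (\<Sum>a\<in>?A. pmf (pg_choices_pmf p m) a *\<^sub>R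
           measure_pmf.expectation (map_pmf (\<lambda>c. a @ [c]) (pg_choice_pmf p)) (\<lambda>cs. g (cs ! j)))"
    unfolding pg_choices_pmf.simps
    by (rule pmf_expectation_bind) (auto simp: choices_fin choice_fin)
  also have "\<dots> = (\<Sum>a\<in>?A. pmf (pg_choices_pmf p m) a *
           measure_pmf.expectation (pg_choice_pmf p) (\<lambda>c. g ((a @ [c]) ! j)))"
    by simp
  finally have E: "measure_pmf.expectation (pg_choices_pmf p (Suc m)) (\<lambda>cs. g (cs ! j)) =
     (\<Sum>a\<in>?A. pmf (pg_choices_pmf p m) a * measure_pmf.expectation (pg_choice_pmf p) (\<lambda>c. g ((a @ [c]) ! j)))" .
  show ?case
  proof (cases "j < m")
    case True
    have "(\<Sum>a\<in>?A. pmf (pg_choices_pmf p m) a * measure_pmf.expectation (pg_choice_pmf p) (\<lambda>c. g ((a @ [c]) ! j)))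
        = (\<Sum>a\<in>?A. pmf (pg_choices_pmf p m) a *\<^sub>R g (a ! j))"
      by (intro sum.cong refl) (use True choices_set in \<open>auto simp: nth_append\<close>)
    also have "\<dots> = measure_pmf.expectation (pg_choices_pmf p m) (\<lambda>cs. g (cs ! j))"
      by (rule integral_measure_pmf[symmetric]) (auto simp: choices_fin)
    finally show ?thesis using E Suc True by simp
  next
    case False
    then have j: "j = m" using Suc by simp
    have "(\<Sum>a\<in>?A. pmf (pg_choices_pmf p m) a * measure_pmf.expectation (pg_choice_pmf p) (\<lambda>c. g ((a @ [c]) ! j)))
        = (\<Sum>a\<in>?A. pmf (pg_choices_pmf p m) a * measure_pmf.expectation (pg_choice_pmf p) g)"
      by (intro sum.cong refl) (use j choices_set in \<open>auto simp: nth_append\<close>)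
    also have "\<dots> = measure_pmf.expectation (pg_choice_pmf p) g"
      by (simp add: sum_distrib_right[symmetric] sum_pmf_eq_1 choices_fin)
    finally show ?thesis using E by simp
  qed
qed

lemma cd_vals: "cd 0 (Suc 0) = 1" "cd 0 1 = 1" "cd 0 2 = 2" "cd 0 3 = 2" "cd 0 4 = 1" by (simp_all add: cd_def)

lemma E_choice: "0 \<le> p \<Longrightarrow> p \<le> 1 \<Longrightarrow> measure_pmf.expectation (pg_choice_pmf p) (\<lambda>x. real (cd 0 x)) = 2 - p"
  unfolding pg_choice_pmf_def
  by (subst pmf_expectation_bind[where A=UNIV]) (auto simp: UNIV_bool cd_vals algebra_simps)



lemma E_GF:
  fixes M :: "'a pmf" and X :: "'a \<Rightarrow> nat \<Rightarrow> real"
  assumes fin: "finite (set_pmf M)"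
  shows "measure_pmf.expectation M (\<lambda>x. GF n (X x)) = GF n (\<lambda>k. measure_pmf.expectation M (\<lambda>x. X x k))"
proof -
  have I[simp]: "integrable (measure_pmf M) f" for f :: "'a \<Rightarrow> real"
    using integrable_measure_pmf_finite[OF fin] .
  let ?EX = "\<lambda>k. measure_pmf.expectation M (\<lambda>x. X x k)"
  have Hr: "measure_pmf.expectation M (\<lambda>x. GHr (X x) b) = GHr ?EX b" for b
    unfolding GHr_def by (simp add: integral_add)
  have W: "measure_pmf.expectation M (\<lambda>x. GW n (X x) a) = GW n ?EX a" for a
    unfolding GW_def by (simp add: integral_add)
  have IN: "measure_pmf.expectation M (\<lambda>x. GIN n (X x) b) = GIN n ?EX b" for b
    unfolding GIN_def by (simp add: integral_add Hr)
  have OUT: "measure_pmf.expectation M (\<lambda>x. GOUT n (X x) a) = GOUT n ?EX a" for a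
    unfolding GOUT_def by (simp add: integral_add integral_diff Hr)
  show ?thesis
    unfolding GF_def by (simp add: integral_add integral_diff W IN OUT)
qed



definition Ec :: "nat \<Rightarrow> real \<Rightarrow> nat \<Rightarrow> real" where
  "Ec n p k = (if k = 0 then 0 else if k + 1 < n then 2 - p else 0)"

definition Ds :: "nat \<Rightarrow> real" where "Ds a = (if a = 0 then 11 else 12)"
definition INs :: "real \<Rightarrow> nat \<Rightarrow> real" where
  "INs p b = (if b = 0 then 12 else 24 + 12 * (real b - 1) * (3 - p) + (2 - p))"
definition OUTs :: "real \<Rightarrow> nat \<Rightarrow> real" where
  "OUTs p a = (if a = 0 then -12 else 12 * (real a - 1) * (3 - p) + 11 * (2 - p))"
definition Ws :: "real \<Rightarrow> nat \<Rightarrow> real" where "Ws p a = (if a = 0 then 72 else 84 + (2 - p))"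

lemma GHr_Ec: "b \<le> m \<Longrightarrow> GHr (Ec (Suc m) p) b = (if b = 0 then 0 else 1 + (real b - 1) * (3 - p))"
proof (induction b)
  case 0 then show ?case by (simp add: GHr_def)
next
  case (Suc b)
  have IH: "GHr (Ec (Suc m) p) b = (if b = 0 then 0 else 1 + (real b - 1) * (3 - p))" using Suc by simp
  have cb: "Ec (Suc m) p b = (if b = 0 then 0 else 2 - p)" using Suc.prems by (simp add: Ec_def)
  have "GHr (Ec (Suc m) p) (Suc b) = GHr (Ec (Suc m) p) b + Ec (Suc m) p b + 1" by (simp add: GHr_def)
  then show ?case using IH cb by (cases "b = 0") (simp_all add: algebra_simps)
qed

lemma SD: "(\<Sum>a<Suc k. Ds a) = 12 * (real k + 1) - 1"
  by (induction k) (auto simp: Ds_def algebra_simps)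
lemma SW: "(\<Sum>a<Suc k. Ws p a) = 72 + real k * (84 + (2 - p))"
  by (induction k) (auto simp: Ws_def algebra_simps)
lemma SO: "(\<Sum>a<Suc k. OUTs p a) = -12 + 6 * (3 - p) * real k * (real k - 1) + 11 * (2 - p) * real k"
  by (induction k) (auto simp: OUTs_def algebra_simps)

definition polyC :: "real \<Rightarrow> real \<Rightarrow> real" where
  "polyC p m = (14 - p) + (-92 - 41*p) * m + (6 + 66*p) * m^2 + (72 - 24*p) * m^3"

lemma SC: "(\<Sum>b<Suc k. \<Sum>a<b. Ds a * INs p b - Ds b * OUTs p a) = polyC p (real k + 1)"
proof (induction k)
  case 0 then show ?case by (simp add: polyC_def)
next
  case (Suc k)
  have D12: "Ds (Suc k) = 12" by (simp add: Ds_def)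
  have "(\<Sum>a<Suc k. Ds a * INs p (Suc k) - Ds (Suc k) * OUTs p a)
      = (\<Sum>a<Suc k. Ds a) * INs p (Suc k) - 12 * (\<Sum>a<Suc k. OUTs p a)"
    by (simp only: D12 sum_subtractf sum_distrib_left[symmetric] sum_distrib_right[symmetric])
  also have "\<dots> = (12 * (real k + 1) - 1) * INs p (Suc k) - 12 * (-12 + 6 * (3 - p) * real k * (real k - 1) + 11 * (2 - p) * real k)"
    by (simp only: SD SO)
  finally have L: "(\<Sum>a<Suc k. Ds a * INs p (Suc k) - Ds (Suc k) * OUTs p a) = (12 * (real k + 1) - 1) * INs p (Suc k) - 12 * (-12 + 6 * (3 - p) * real k * (real k - 1) + 11 * (2 - p) * real k)" .
  have "(\<Sum>b<Suc (Suc k). \<Sum>a<b. Ds a * INs p b - Ds b * OUTs p a)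
     = (\<Sum>b<Suc k. \<Sum>a<b. Ds a * INs p b - Ds b * OUTs p a) + (\<Sum>a<Suc k. Ds a * INs p (Suc k) - Ds (Suc k) * OUTs p a)"
    by (rule sum.lessThan_Suc)
  also have "\<dots> = polyC p (real (Suc k) + 1)"
    unfolding Suc.IH L by (simp add: INs_def polyC_def algebra_simps power2_eq_square power3_eq_cube)
  finally show ?case .
qed

lemma GF_Ec: assumes "n \<ge> 1"
  shows "GF n (Ec n p) = (72 - 24 * p) * real n ^ 3 + (72 * p - 12) * real n ^ 2 + (1 - 48 * p) * real n - 1"
proof (cases "n = 1")
  case True then show ?thesis by (simp add: GF_def GW_def Ec_def algebra_simps)
next
  case False
  then obtain k where n: "n = Suc (Suc k)" using assms by (metis One_nat_def Suc_le_D le_SucE less_eq_Suc_le not_less_eq_eq)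
  let ?m = "Suc k"
  let ?c = "Ec n p"
  have GDa: "a < ?m \<Longrightarrow> GD n a = Ds a" for a by (simp add: GD_def Ds_def n)
  have GDm: "GD n ?m = 11" by (simp add: GD_def n)
  have Wa: "a < ?m \<Longrightarrow> GW n ?c a = Ws p a" for a by (simp add: GW_def Ws_def Ec_def n)
  have Wm: "GW n ?c ?m = 72" by (simp add: GW_def Ec_def n)
  have INa: "b < ?m \<Longrightarrow> GIN n ?c b = INs p b" for b
    using GHr_Ec[of b "Suc k" p] by (auto simp: GIN_def INs_def GD_def Ec_def n algebra_simps)
  have INm: "GIN n ?c ?m = 11 * (1 + real k * (3 - p)) + 12"
    using GHr_Ec[of "Suc k" "Suc k" p] by (simp add: GIN_def GD_def Ec_def n algebra_simps)
  have OUTa: "a < ?m \<Longrightarrow> GOUT n ?c a = OUTs p a" for a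
    using GHr_Ec[of a "Suc k" p] by (auto simp: GOUT_def OUTs_def GD_def Ec_def n algebra_simps)
  have "GF n ?c = (\<Sum>a<?m. GW n ?c a) + GW n ?c ?m + (\<Sum>b<?m. \<Sum>a<b. GD n a * GIN n ?c b - GD n b * GOUT n ?c a)
       + (\<Sum>a<?m. GD n a * GIN n ?c ?m - GD n ?m * GOUT n ?c a)"
    unfolding GF_def n by simp
  also have "(\<Sum>a<?m. GW n ?c a) = (\<Sum>a<?m. Ws p a)" using Wa by simp
  also have "(\<Sum>b<?m. \<Sum>a<b. GD n a * GIN n ?c b - GD n b * GOUT n ?c a) = (\<Sum>b<?m. \<Sum>a<b. Ds a * INs p b - Ds b * OUTs p a)"
    by (intro sum.cong refl) (simp add: GDa INa OUTa)
  also have "(\<Sum>a<?m. GD n a * GIN n ?c ?m - GD n ?m * GOUT n ?c a) = (\<Sum>a<?m. Ds a * GIN n ?c ?m - 11 * OUTs p a)"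
    by (intro sum.cong refl) (simp add: GDa GDm OUTa)
  also have "\<dots> = (\<Sum>a<?m. Ds a) * GIN n ?c ?m - 11 * (\<Sum>a<?m. OUTs p a)"
    by (simp only: sum_subtractf sum_distrib_left[symmetric] sum_distrib_right[symmetric])
  finally show ?thesis
    unfolding SW SC SD SO Wm INm by (simp add: n polyC_def algebra_simps power2_eq_square power3_eq_cube)
qed




definition cvg :: "nat \<Rightarrow> nat list \<Rightarrow> nat \<Rightarrow> real" where
  "cvg n cs k = (if k + 1 < n then real (cd 0 (pg_target cs k)) else 0)"

lemma (in pgl) cv_cvg: "cv = cvg n cs" unfolding cv_def cvg_def by (rule ext) simp

lemma (in pgl) gut_GF': "pg_gutman n cs = GF n (cvg n cs)" using gut_GF cv_cvg by simp

lemma valid_supp: assumes "cs \<in> set_pmf (pg_choices_pmf p (n - 2))" shows "pgl n cs"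
proof
  fix k :: nat assume k: "1 \<le> k" "k + 1 < n"
  have "length cs = n - 2" "set cs \<subseteq> {1,2,3,4}" using choices_set[OF assms] by auto
  moreover have "k - 1 < length cs" using k calculation by simp
  ultimately have "cs ! (k - 1) \<in> {1,2,3,4}" using nth_mem by blast
  then show "pg_target cs k \<in> {1,2,3,4}" using k by (simp add: pg_target_def)
qed

lemma E_cv: assumes "0 \<le> p" "p \<le> 1"
  shows "measure_pmf.expectation (pg_choices_pmf p (n - 2)) (\<lambda>cs. cvg n cs k) = Ec n p k"
proof -
  consider "k = 0" | "1 \<le> k" "k + 1 < n" | "\<not> k + 1 < n" by linarith
  then show ?thesis
  proof cases
    case 1
    have "cvg n cs k = 0" for cs using 1 by (simp add: cvg_def pg_target_def)
    then show ?thesis using 1 by (simp add: Ec_def)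
  next
    case 2
    have "measure_pmf.expectation (pg_choices_pmf p (n - 2)) (\<lambda>cs. cvg n cs k)
        = measure_pmf.expectation (pg_choices_pmf p (n - 2)) (\<lambda>cs. real (cd 0 (cs ! (k - 1))))"
      using 2 by (simp add: cvg_def pg_target_def)
    also have "\<dots> = measure_pmf.expectation (pg_choice_pmf p) (\<lambda>x. real (cd 0 x))"
      by (rule E_nth) (use 2 in simp)
    also have "\<dots> = 2 - p" using E_choice assms by simp
    finally show ?thesis using 2 by (simp add: Ec_def)
  next
    case 3 then show ?thesis by (simp add: cvg_def Ec_def)
  qed
qed

theorem theorem2p1:
  fixes p1 :: real and n :: nat
  assumes "0 \<le> p1" and "p1 \<le> 1" and "n \<ge> 1"
  shows "measure_pmf.expectation (pg_choices_pmf p1 (n - 2)) (\<lambda>cs. pg_gutman n cs) =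
    (72 - 24 * p1) * real n ^ 3 + (72 * p1 - 12) * real n ^ 2 + (1 - 48 * p1) * real n - 1"
proof -
  let ?M = "pg_choices_pmf p1 (n - 2)"
  have "measure_pmf.expectation ?M (\<lambda>cs. pg_gutman n cs) = measure_pmf.expectation ?M (\<lambda>cs. GF n (cvg n cs))"
    by (rule integral_cong_AE) (auto intro!: AE_pmfI simp: pgl.gut_GF'[OF valid_supp])
  also have "\<dots> = GF n (\<lambda>k. measure_pmf.expectation ?M (\<lambda>cs. cvg n cs k))"
    by (rule E_GF) (rule choices_fin)
  also have "(\<lambda>k. measure_pmf.expectation ?M (\<lambda>cs. cvg n cs k)) = Ec n p1"
    using E_cv assms by auto
  also have "GF n (Ec n p1) = (72 - 24 * p1) * real n ^ 3 + (72 * p1 - 12) * real n ^ 2 + (1 - 48 * p1) * real n - 1"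
    by (rule GF_Ec) (use assms in simp)
  finally show ?thesis .
qed


end
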